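(* Given $\lambda > 0$, let $L > 0$ be sufficiently large. Let $\eta$ be a Poisson point process in the plane of intensity $1$, and let $R$ be a $\lambda L \times L$ rectangle with sides parallel to the axes such that $$\min\{ x : (x,y) \in R \} \geqslant (\log L)^{2/3}.$$ Then the Voronoi tilings of $R$ induced by $\eta$ and by $\mathbb{H} \cap \eta$ are non-identical with probability at most $1/L^3$.
   Context: $\mathbb{H} = \{(x,y) \in \mathbb{R}^2 : x \geqslant 0\}$. The Voronoi tiling induced by a point set $P$ assigns to each $u \in P$ the cell of points at least as close to $u$ as to any other point of $P$ (for $\mathbb{H}\cap\eta$, cells are taken within $\mathbb{H}$); the tiling of $R$ is its restriction to $R$. *)

theory Defs
  imports "HOL-Probability.Probability"
begin

type_synonym pt = "real \<times> real"

definition halfplane :: "pt set" where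
  "halfplane = {p. fst p \<ge> 0}"

definition poisson_pp :: "'w measure \<Rightarrow> ('w \<Rightarrow> pt set) \<Rightarrow> bool" where
  "poisson_pp M \<eta> \<longleftrightarrow> prob_space M
    \<and> (\<forall>\<omega>\<in>space M. \<forall>B. bounded B \<longrightarrow> finite (\<eta> \<omega> \<inter> B))
    \<and> (\<forall>B\<in>sets (lborel :: pt measure). bounded B \<longrightarrow>
          (\<lambda>\<omega>. card (\<eta> \<omega> \<inter> B)) \<in> measurable M (count_space UNIV)
        \<and> (\<forall>k::nat. measure M {\<omega>\<in>space M. card (\<eta> \<omega> \<inter> B) = k}
               = exp (- measure lborel B) * measure lborel B ^ k / fact k))
    \<and> (\<forall>(I::nat set) (B::nat \<Rightarrow> pt set). finite I \<longrightarrow>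
          (\<forall>i\<in>I. B i \<in> sets lborel \<and> bounded (B i)) \<longrightarrow>
          disjoint_family_on B I \<longrightarrow>
          prob_space.indep_vars M (\<lambda>_. count_space UNIV) (\<lambda>i \<omega>. card (\<eta> \<omega> \<inter> B i)) I)"

definition voronoi_cell :: "pt set \<Rightarrow> pt set \<Rightarrow> pt \<Rightarrow> pt set" where
  "voronoi_cell S P u = {z\<in>S. \<forall>v\<in>P. dist z u \<le> dist z v}"

definition voronoi_tiling :: "pt set \<Rightarrow> pt set \<Rightarrow> pt set \<Rightarrow> pt set set" where
  "voronoi_tiling S P R = {voronoi_cell S P u \<inter> R | u. u \<in> P \<and> voronoi_cell S P u \<inter> R \<noteq> {}}"

end

theory Submission
  imports Defs "HOL-Real_Asymp.Real_Asymp"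
begin

lemma far_left:
  assumes "fst z \<ge> a" "fst v < 0"
  shows "dist z v > a"
proof -
  have "dist (fst z) (fst v) \<le> dist z v" by (rule dist_fst_le)
  moreover have "dist (fst z) (fst v) > a" using assms by (simp add: dist_real_def)
  ultimately show ?thesis by linarith
qed

lemma tiling_eq:
  assumes R1: "\<forall>z\<in>R. fst z \<ge> a" and R2: "\<forall>z\<in>R. \<exists>w\<in>P. dist z w < a"
  shows "voronoi_tiling UNIV P R = voronoi_tiling halfplane (halfplane \<inter> P) R"
proof -
  have Rh: "R \<subseteq> halfplane"
  proof
    fix z assume "z \<in> R"
    with R2 obtain w where "dist z w < a" by auto
    hence "a > 0" using zero_le_dist[of z w] by linarith
    with R1 \<open>z\<in>R\<close> show "z \<in> halfplane" by (auto simp: halfplane_def)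
  qed
  have c1: "voronoi_cell UNIV P u \<inter> R = voronoi_cell halfplane (halfplane \<inter> P) u \<inter> R"
    if "u \<in> halfplane" for u
  proof
    show "voronoi_cell UNIV P u \<inter> R \<subseteq> voronoi_cell halfplane (halfplane \<inter> P) u \<inter> R"
      using Rh by (auto simp: voronoi_cell_def)
  next
    show "voronoi_cell halfplane (halfplane \<inter> P) u \<inter> R \<subseteq> voronoi_cell UNIV P u \<inter> R"
    proof
      fix z assume z: "z \<in> voronoi_cell halfplane (halfplane \<inter> P) u \<inter> R"
      hence zR: "z \<in> R" and zc: "\<forall>v\<in>halfplane \<inter> P. dist z u \<le> dist z v"
        by (auto simp: voronoi_cell_def)
      obtain w where w: "w \<in> P" "dist z w < a" using R2 zR by auto
      have "w \<in> halfplane"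
      proof (rule ccontr)
        assume "w \<notin> halfplane"
        hence "fst w < 0" by (auto simp: halfplane_def)
        with far_left[of a z w] R1 zR w show False by auto
      qed
      with zc w have "dist z u \<le> dist z w" by blast
      with w have du: "dist z u < a" by linarith
      have "dist z u \<le> dist z v" if "v \<in> P" for v
      proof (cases "v \<in> halfplane")
        case True with zc that show ?thesis by auto
      next
        case False
        hence "fst v < 0" by (auto simp: halfplane_def)
        with far_left[of a z v] R1 zR du show ?thesis by auto
      qed
      with zR show "z \<in> voronoi_cell UNIV P u \<inter> R" by (auto simp: voronoi_cell_def)
    qed
  qed
  have c2: "voronoi_cell UNIV P u \<inter> R = {}" if "u \<in> P" "u \<notin> halfplane" for u
  proof (rule ccontr)
    assume "voronoi_cell UNIV P u \<inter> R \<noteq> {}"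
    then obtain z where zR: "z \<in> R" and zc: "\<forall>v\<in>P. dist z u \<le> dist z v"
      by (auto simp: voronoi_cell_def)
    obtain w where w: "w \<in> P" "dist z w < a" using R2 zR by auto
    have "fst u < 0" using that by (auto simp: halfplane_def)
    with far_left[of a z u] R1 zR have "dist z u > a" by auto
    with zc w show False by fastforce
  qed
  show ?thesis
    unfolding voronoi_tiling_def
  proof (intro equalityI subsetI)
    fix X assume "X \<in> {voronoi_cell UNIV P u \<inter> R |u. u \<in> P \<and> voronoi_cell UNIV P u \<inter> R \<noteq> {}}"
    then obtain u where u: "X = voronoi_cell UNIV P u \<inter> R" "u \<in> P" "voronoi_cell UNIV P u \<inter> R \<noteq> {}"
      by auto
    with c2 have "u \<in> halfplane" by blast
    with u c1[of u] show "X \<in> {voronoi_cell halfplane (halfplane \<inter> P) u \<inter> R |u.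
      u \<in> halfplane \<inter> P \<and> voronoi_cell halfplane (halfplane \<inter> P) u \<inter> R \<noteq> {}}"
      by (intro CollectI exI[of _ u]) auto
  next
    fix X assume "X \<in> {voronoi_cell halfplane (halfplane \<inter> P) u \<inter> R |u.
      u \<in> halfplane \<inter> P \<and> voronoi_cell halfplane (halfplane \<inter> P) u \<inter> R \<noteq> {}}"
    then obtain u where u: "X = voronoi_cell halfplane (halfplane \<inter> P) u \<inter> R" "u \<in> halfplane" "u \<in> P"
       "voronoi_cell halfplane (halfplane \<inter> P) u \<inter> R \<noteq> {}" by auto
    with c1[of u] show "X \<in> {voronoi_cell UNIV P u \<inter> R |u. u \<in> P \<and> voronoi_cell UNIV P u \<inter> R \<noteq> {}}"
      by (intro CollectI exI[of _ u]) auto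
  qed
qed

lemma measure_square:
  assumes "s \<ge> 0"
  shows "measure lborel ({x..x+s} \<times> {y..y+s} :: (real\<times>real) set) = s^2"
proof -
  have "emeasure (lborel \<Otimes>\<^sub>M lborel) ({x..x+s} \<times> {y..y+s} :: (real\<times>real) set) = ennreal s * ennreal s"
    using assms by (subst lborel.emeasure_pair_measure_Times) auto
  then show ?thesis using assms unfolding lborel_prod
    by (simp add: measure_def power2_eq_square ennreal_mult[symmetric])
qed

lemma asymp1: "eventually (\<lambda>L::real. (lam*L+1)*(L+1)*exp(- (((ln L powr (2/3)) / 3) ^ 2)) \<le> 1 / L ^ 3) at_top"
  by real_asymp

lemma asymp2: "eventually (\<lambda>L::real. 1 \<le> (ln L powr (2/3)) / 3) at_top"
  by real_asymp

theorem lemma3p8: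
  fixes lam :: real
  assumes "lam > 0"
  shows "\<exists>L0. \<forall>L\<ge>L0. \<forall>(M::'w measure) \<eta> a b.
           poisson_pp M \<eta> \<longrightarrow> a \<ge> (ln L) powr (2/3) \<longrightarrow>
           (let R = {a..a + lam * L} \<times> {b..b + L} in
             \<exists>A\<in>sets M. {\<omega>\<in>space M. voronoi_tiling UNIV (\<eta> \<omega>) R
                                   \<noteq> voronoi_tiling halfplane (halfplane \<inter> \<eta> \<omega>) R} \<subseteq> A
                       \<and> measure M A \<le> 1 / L ^ 3)"
proof -
  have "eventually (\<lambda>L::real. (lam*L+1)*(L+1)*exp(- (((ln L powr (2/3)) / 3) ^ 2)) \<le> 1 / L ^ 3
      \<and> 1 \<le> (ln L powr (2/3)) / 3 \<and> L \<ge> 1) at_top"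
    using asymp1 asymp2 eventually_ge_at_top[of 1] by eventually_elim auto
  then obtain L0 where L0: "\<And>L. L \<ge> L0 \<Longrightarrow> (lam*L+1)*(L+1)*exp(- (((ln L powr (2/3)) / 3) ^ 2)) \<le> 1 / L ^ 3
      \<and> 1 \<le> (ln L powr (2/3)) / 3 \<and> L \<ge> 1"
    by (auto simp: eventually_at_top_linorder)
  show ?thesis
  proof (intro exI allI impI)
    fix L :: real and M :: "'w measure" and \<eta> a b
    assume L: "L \<ge> L0" and pp: "poisson_pp M \<eta>" and a: "a \<ge> (ln L) powr (2/3)"
    define c where "c = (ln L) powr (2/3)"
    define s where "s = c / 3"
    from L0[OF L] have bnd: "(lam*L+1)*(L+1)*exp(- (s ^ 2)) \<le> 1 / L ^ 3" and s1: "1 \<le> s" and L1: "L \<ge> 1"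
      by (auto simp: s_def c_def)
    have ps: "prob_space M" using pp by (simp add: poisson_pp_def)
    interpret prob_space M by (rule ps)
    define R where "R = {a..a + lam * L} \<times> {b..b + L}"
    define n1 where "n1 = nat \<lfloor>lam * L / s\<rfloor> + 1"
    define n2 where "n2 = nat \<lfloor>L / s\<rfloor> + 1"
    define I where "I = {..<n1} \<times> {..<n2}"
    define Q where "Q = (\<lambda>ij::nat\<times>nat. {a + real (fst ij) * s..a + real (fst ij) * s + s} \<times> {b + real (snd ij) * s..b + real (snd ij) * s + s})"
    define E where "E = (\<lambda>ij. {\<omega>\<in>space M. card (\<eta> \<omega> \<inter> Q ij) = 0})"
    define A where "A = (\<Union>ij\<in>I. E ij)"
    have Qb: "Q ij \<in> sets lborel \<and> bounded (Q ij)" for ij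
      by (auto simp: Q_def intro!: bounded_Times borel_closed closed_Times)
    have cnt: "(\<lambda>\<omega>. card (\<eta> \<omega> \<inter> Q ij)) \<in> measurable M (count_space UNIV)
        \<and> measure M {\<omega>\<in>space M. card (\<eta> \<omega> \<inter> Q ij) = 0} = exp (- measure lborel (Q ij))" for ij
      using pp Qb[of ij] unfolding poisson_pp_def by fastforce
    have Es: "E ij \<in> events" for ij
    proof -
      have "E ij = (\<lambda>\<omega>. card (\<eta> \<omega> \<inter> Q ij)) -` {0} \<inter> space M" by (auto simp: E_def)
      thus ?thesis using measurable_sets[OF conjunct1[OF cnt[of ij]], of "{0}"] by simp
    qed
    have mQ: "measure lborel (Q ij) = s^2" for ij
      using s1 by (auto simp: Q_def intro!: measure_square)
    have PE: "prob (E ij) = exp (- (s^2))" for ij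
      using cnt[of ij] mQ[of ij] by (simp add: E_def)
    have As: "A \<in> events" unfolding A_def using Es by (auto simp: I_def)
    have "prob A \<le> (\<Sum>ij\<in>I. prob (E ij))"
      unfolding A_def by (rule finite_measure_subadditive_finite) (use Es in \<open>auto simp: I_def\<close>)
    also have "\<dots> = real (card I) * exp (- (s^2))" by (simp add: PE)
    also have "\<dots> \<le> (lam*L+1)*(L+1)*exp(- (s ^ 2))"
    proof -
      have "lam * L / s \<ge> 0" using \<open>lam>0\<close> L1 s1 by (intro divide_nonneg_pos mult_nonneg_nonneg) auto
      hence "real n1 \<le> lam * L / s + 1" unfolding n1_def
        by (simp add: of_nat_nat)
      also have "\<dots> \<le> lam * L + 1"
      proof -
        have "lam * L * 1 \<le> lam * L * s" using \<open>lam>0\<close> L1 s1 by (intro mult_left_mono) auto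
        thus ?thesis using s1 by (simp add: divide_le_eq)
      qed
      finally have h1: "real n1 \<le> lam * L + 1" .
      have "real n2 \<le> L / s + 1" using L1 s1 unfolding n2_def by (simp add: of_nat_nat)
      also have "\<dots> \<le> L + 1" using L1 s1 by (simp add: divide_le_eq mult_le_cancel_left1)
      finally have h2: "real n2 \<le> L + 1" .
      have "real (card I) = real n1 * real n2" by (simp add: I_def card_cartesian_product)
      also have "\<dots> \<le> (lam*L+1)*(L+1)" using h1 h2 by (intro mult_mono) auto
      finally show ?thesis by (simp add: mult_right_mono)
    qed
    also have "\<dots> \<le> 1 / L^3" by (rule bnd)
    finally have PA: "prob A \<le> 1 / L^3" .
    have sub: "{\<omega>\<in>space M. voronoi_tiling UNIV (\<eta> \<omega>) R
                 \<noteq> voronoi_tiling halfplane (halfplane \<inter> \<eta> \<omega>) R} \<subseteq> A"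
    proof
      fix \<omega> assume w: "\<omega> \<in> {\<omega>\<in>space M. voronoi_tiling UNIV (\<eta> \<omega>) R
                 \<noteq> voronoi_tiling halfplane (halfplane \<inter> \<eta> \<omega>) R}"
      have R1: "\<forall>z\<in>R. fst z \<ge> a" by (auto simp: R_def)
      have "\<not> (\<forall>z\<in>R. \<exists>w\<in>\<eta> \<omega>. dist z w < a)"
        using w tiling_eq[OF R1, of "\<eta> \<omega>"] by blast
      then obtain z where zR: "z \<in> R"
        and nz: "\<forall>w\<in>\<eta> \<omega>. \<not> dist z w < a" by blast
      obtain x y where z: "z = (x, y)" by (cases z)
      define i where "i = nat \<lfloor>(x - a) / s\<rfloor>"
      define j where "j = nat \<lfloor>(y - b) / s\<rfloor>"
      have sp: "s > 0" using s1 by simp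
      have xr: "a \<le> x" "x \<le> a + lam * L" and yr: "b \<le> y" "y \<le> b + L" using zR z by (auto simp: R_def)
      have fi: "real i = of_int \<lfloor>(x - a) / s\<rfloor>" using xr sp by (simp add: i_def)
      have fj: "real j = of_int \<lfloor>(y - b) / s\<rfloor>" using yr sp by (simp add: j_def)
      have xi: "real i * s \<le> x - a" "x - a \<le> real i * s + s"
      proof -
        have "of_int \<lfloor>(x - a) / s\<rfloor> \<le> (x - a) / s" by (rule of_int_floor_le)
        thus "real i * s \<le> x - a" using fi sp by (simp add: le_divide_eq)
        have "(x - a) / s < of_int \<lfloor>(x - a) / s\<rfloor> + 1" by (rule real_of_int_floor_add_one_gt)
        thus "x - a \<le> real i * s + s" using fi sp by (simp add: divide_less_eq algebra_simps)
      qed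
      have yj: "real j * s \<le> y - b" "y - b \<le> real j * s + s"
      proof -
        have "of_int \<lfloor>(y - b) / s\<rfloor> \<le> (y - b) / s" by (rule of_int_floor_le)
        thus "real j * s \<le> y - b" using fj sp by (simp add: le_divide_eq)
        have "(y - b) / s < of_int \<lfloor>(y - b) / s\<rfloor> + 1" by (rule real_of_int_floor_add_one_gt)
        thus "y - b \<le> real j * s + s" using fj sp by (simp add: divide_less_eq algebra_simps)
      qed
      have "i < n1"
      proof -
        have "\<lfloor>(x - a) / s\<rfloor> \<le> \<lfloor>lam * L / s\<rfloor>"
          using xr sp by (intro floor_mono) (simp add: divide_right_mono)
        thus ?thesis using xr sp unfolding i_def n1_def by linarith
      qed
      moreover have "j < n2"
      proof -
        have "\<lfloor>(y - b) / s\<rfloor> \<le> \<lfloor>L / s\<rfloor>"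
          using yr sp by (intro floor_mono) (simp add: divide_right_mono)
        thus ?thesis using yr sp unfolding j_def n2_def by linarith
      qed
      ultimately have ijI: "(i, j) \<in> I" by (simp add: I_def)
      have "\<eta> \<omega> \<inter> Q (i, j) = {}"
      proof (rule ccontr)
        assume "\<eta> \<omega> \<inter> Q (i, j) \<noteq> {}"
        then obtain p q where pq: "(p, q) \<in> \<eta> \<omega>" "(p, q) \<in> Q (i, j)" by auto
        have "\<bar>x - p\<bar> \<le> s" "\<bar>y - q\<bar> \<le> s" using pq(2) xi yj by (auto simp: Q_def)
        hence "dist z (p, q) \<le> 2 * s"
          using sqrt_sum_squares_le_sum_abs[of "x - p" "y - q"]
          by (simp add: z dist_Pair_Pair dist_real_def)
        also have "\<dots> < c" using sp by (simp add: s_def)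
        also have "\<dots> \<le> a" using a by (simp add: c_def)
        finally show False using nz pq(1) by auto
      qed
      hence "\<omega> \<in> E (i, j)" using w by (simp add: E_def)
      thus "\<omega> \<in> A" using ijI by (auto simp: A_def)
    qed
    show "let R = {a..a + lam * L} \<times> {b..b + L} in
             \<exists>A\<in>sets M. {\<omega>\<in>space M. voronoi_tiling UNIV (\<eta> \<omega>) R
                                   \<noteq> voronoi_tiling halfplane (halfplane \<inter> \<eta> \<omega>) R} \<subseteq> A
                       \<and> measure M A \<le> 1 / L ^ 3"
      unfolding Let_def R_def[symmetric] using As sub PA by auto
  qed
qed

end
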